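(* Let $R$ be a ring and $n\ge 1$. Then $R$ is almost Armendariz if and only if the upper triangular matrix ring $T_n(R)$ is almost Armendariz.
   Context: All rings are associative with identity. For a ring $R$, $P(R)$ denotes the prime radical of $R$ (the intersection of all prime ideals of $R$, equivalently the set of strongly nilpotent elements of $R$). A ring $R$ is called almost Armendariz if whenever $f(x)=\sum_{i=0}^m a_ix^i$ and $g(x)=\sum_{j=0}^n b_jx^j\in R[x]$ satisfy $f(x)g(x)=0$, then $a_ib_j\in P(R)$ for all $0\le i\le m$, $0\le j\le n$. $T_n(R)$ denotes the ring of $n\times n$ upper triangular matrices over $R$. *)

theory Defs
  imports "HOL-Algebra.UnivPoly" "HOL-Algebra.Ideal_Product"
begin

definition nc_prime_ideal :: "'a set \<Rightarrow> ('a, 'b) ring_scheme \<Rightarrow> bool" where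
  "nc_prime_ideal P R \<longleftrightarrow> ideal P R \<and> P \<noteq> carrier R \<and>
     (\<forall>I J. ideal I R \<longrightarrow> ideal J R \<longrightarrow> ideal_prod R I J \<subseteq> P \<longrightarrow> I \<subseteq> P \<or> J \<subseteq> P)"

text \<open>Prime radical: intersection of all prime ideals (the whole ring if there are none).\<close>
definition prime_radical :: "('a, 'b) ring_scheme \<Rightarrow> 'a set" where
  "prime_radical R = carrier R \<inter> \<Inter> {P. nc_prime_ideal P R}"

definition almost_armendariz :: "('a, 'b) ring_scheme \<Rightarrow> bool" where
  "almost_armendariz R \<longleftrightarrow>
     (\<forall>f \<in> carrier (UP R). \<forall>g \<in> carrier (UP R).
        f \<otimes>\<^bsub>UP R\<^esub> g = \<zero>\<^bsub>UP R\<^esub> \<longrightarrow>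
        (\<forall>i \<le> deg R f. \<forall>j \<le> deg R g.
           coeff (UP R) f i \<otimes>\<^bsub>R\<^esub> coeff (UP R) g j \<in> prime_radical R))"

text \<open>The ring T_n(R) of n x n upper triangular matrices over R, indices 0..n-1;
  matrices are represented as functions nat => nat => 'a which are zero outside
  the upper triangle of the index range.\<close>
definition UT :: "nat \<Rightarrow> ('a, 'b) ring_scheme \<Rightarrow> (nat \<Rightarrow> nat \<Rightarrow> 'a) ring" where
  "UT n R = \<lparr> carrier = {A. (\<forall>i j. A i j \<in> carrier R) \<and>
                               (\<forall>i j. (j < i \<or> n \<le> j) \<longrightarrow> A i j = \<zero>\<^bsub>R\<^esub>)},
             monoid.mult = (\<lambda>A B i j. finsum R (\<lambda>k. A i k \<otimes>\<^bsub>R\<^esub> B k j) {..<n}),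
             one = (\<lambda>i j. if i = j \<and> i < n then \<one>\<^bsub>R\<^esub> else \<zero>\<^bsub>R\<^esub>),
             zero = (\<lambda>i j. \<zero>\<^bsub>R\<^esub>),
             add = (\<lambda>A B i j. A i j \<oplus>\<^bsub>R\<^esub> B i j) \<rparr>"

end

theory Submission
  imports Defs "HOL-Algebra.QuotRing"
begin

lemma (in abelian_monoid) finsum_swap:
  assumes "finite A" "finite B" "\<And>i j. i \<in> A \<Longrightarrow> j \<in> B \<Longrightarrow> f i j \<in> carrier G"
  shows "(\<Oplus>i\<in>A. \<Oplus>j\<in>B. f i j) = (\<Oplus>j\<in>B. \<Oplus>i\<in>A. f i j)"
  using assms
proof (induction A rule: finite_induct)
  case empty
  then show ?case by (simp add: finsum_zero[symmetric] cong: finsum_cong)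
next
  case (insert a A)
  have "(\<Oplus>i\<in>insert a A. \<Oplus>j\<in>B. f i j) = (\<Oplus>j\<in>B. f a j) \<oplus> (\<Oplus>i\<in>A. \<Oplus>j\<in>B. f i j)"
    using insert by (intro finsum_insert) (auto intro!: finsum_closed)
  also have "\<dots> = (\<Oplus>j\<in>B. f a j) \<oplus> (\<Oplus>j\<in>B. \<Oplus>i\<in>A. f i j)"
    using insert by simp
  also have "\<dots> = (\<Oplus>j\<in>B. f a j \<oplus> (\<Oplus>i\<in>A. f i j))"
    using insert by (intro finsum_addf[symmetric]) (auto intro!: finsum_closed)
  also have "\<dots> = (\<Oplus>j\<in>B. \<Oplus>i\<in>insert a A. f i j)"
    using insert by (intro finsum_cong) (auto simp: finsum_insert Pi_def)
  finally show ?case .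
qed

context ring begin

lemma UT_carrier_iff:
  "A \<in> carrier (UT n R) \<longleftrightarrow> (\<forall>i j. A i j \<in> carrier R) \<and> (\<forall>i j. (j < i \<or> n \<le> j) \<longrightarrow> A i j = \<zero>)"
  by (simp add: UT_def)

lemma UT_mult_apply: "(A \<otimes>\<^bsub>UT n R\<^esub> B) i j = (\<Oplus>k\<in>{..<n}. A i k \<otimes> B k j)"
  by (simp add: UT_def)
lemma UT_add_apply: "(A \<oplus>\<^bsub>UT n R\<^esub> B) i j = A i j \<oplus> B i j"
  by (simp add: UT_def)
lemma UT_zero_apply: "\<zero>\<^bsub>UT n R\<^esub> i j = \<zero>"
  by (simp add: UT_def)
lemma UT_one_apply: "\<one>\<^bsub>UT n R\<^esub> i j = (if i = j \<and> i < n then \<one> else \<zero>)"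
  by (simp add: UT_def)

lemma UT_carrD1: "A \<in> carrier (UT n R) \<Longrightarrow> A i j \<in> carrier R"
  by (simp add: UT_def)
lemma UT_carrD2: "A \<in> carrier (UT n R) \<Longrightarrow> j < i \<Longrightarrow> A i j = \<zero>"
  by (simp add: UT_def)
lemma UT_carrD3: "A \<in> carrier (UT n R) \<Longrightarrow> n \<le> j \<Longrightarrow> A i j = \<zero>"
  by (simp add: UT_def)

lemma finsum_zero_terms: "(\<And>k. k \<in> K \<Longrightarrow> f k = \<zero>) \<Longrightarrow> finsum R f K = \<zero>"
  by (simp add: add.finprod_one_eqI)

lemma fcong: "(\<And>i. i \<in> A \<Longrightarrow> g i \<in> carrier R) \<Longrightarrow> (\<And>i. i \<in> A \<Longrightarrow> f i = g i) \<Longrightarrow> finsum R f A = finsum R g A"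
  by (rule finsum_cong') auto

lemma finsum_single_term:
  assumes "k \<in> K" "finite K" "\<And>l. l \<in> K \<Longrightarrow> l \<noteq> k \<Longrightarrow> f l = \<zero>" "f k \<in> carrier R"
  shows "finsum R f K = f k"
proof -
  have "finsum R f K = (\<Oplus>l\<in>K. if k = l then f l else \<zero>)"
  proof (rule fcong)
    fix i assume i: "i \<in> K"
    show "(if k = i then f i else \<zero>) \<in> carrier R" using assms by auto
    show "f i = (if k = i then f i else \<zero>)" using assms i by (cases "k = i") auto
  qed
  also have "\<dots> = f k"
  proof (rule finsum_singleton)
    show "f \<in> K \<rightarrow> carrier R" using assms by (auto simp: Pi_def) (metis zero_closed)
  qed (use assms in auto)
  finally show ?thesis .
qed

lemma UT_mult_closed:
  assumes "A \<in> carrier (UT n R)" "B \<in> carrier (UT n R)"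
  shows "A \<otimes>\<^bsub>UT n R\<^esub> B \<in> carrier (UT n R)"
  unfolding UT_carrier_iff UT_mult_apply
proof (intro conjI allI impI)
  fix i j show "(\<Oplus>k\<in>{..<n}. A i k \<otimes> B k j) \<in> carrier R"
    using assms by (intro finsum_closed) (auto simp: UT_carrD1)
  assume "j < i \<or> n \<le> j"
  then show "(\<Oplus>k\<in>{..<n}. A i k \<otimes> B k j) = \<zero>"
  proof
    assume "j < i"
    show ?thesis
    proof (rule finsum_zero_terms)
      fix k assume "k \<in> {..<n}"
      show "A i k \<otimes> B k j = \<zero>"
      proof (cases "k < i")
        case True then show ?thesis using assms by (simp add: UT_carrD1 UT_carrD2)
      next
        case False then have "j < k" using \<open>j < i\<close> by simp
        then show ?thesis using assms by (simp add: UT_carrD1 UT_carrD2)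
      qed
    qed
  next
    assume "n \<le> j" then show ?thesis using assms
      by (intro finsum_zero_terms) (simp add: UT_carrD1 UT_carrD3)
  qed
qed

lemma UT_one_closed: "\<one>\<^bsub>UT n R\<^esub> \<in> carrier (UT n R)"
  by (auto simp: UT_def)
lemma UT_zero_closed: "\<zero>\<^bsub>UT n R\<^esub> \<in> carrier (UT n R)"
  by (auto simp: UT_def)
lemma UT_add_closed:
  "A \<in> carrier (UT n R) \<Longrightarrow> B \<in> carrier (UT n R) \<Longrightarrow> A \<oplus>\<^bsub>UT n R\<^esub> B \<in> carrier (UT n R)"
  by (auto simp: UT_def)

end

context ring begin
lemma UT_l_one: assumes "A \<in> carrier (UT n R)" shows "\<one>\<^bsub>UT n R\<^esub> \<otimes>\<^bsub>UT n R\<^esub> A = A"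
proof (intro ext)
  fix i j
  show "(\<one>\<^bsub>UT n R\<^esub> \<otimes>\<^bsub>UT n R\<^esub> A) i j = A i j"
  proof (cases "i < n")
    case True
    have "(\<Oplus>k\<in>{..<n}. (if i = k \<and> i < n then \<one> else \<zero>) \<otimes> A k j) = (if i = i \<and> i < n then \<one> else \<zero>) \<otimes> A i j"
      by (rule finsum_single_term) (use True assms in \<open>auto simp: UT_carrD1\<close>)
    then show ?thesis unfolding UT_mult_apply UT_one_apply using True assms by (simp add: UT_carrD1)
  next
    case False
    have "A i j = \<zero>"
    proof (cases "j < i")
      case True then show ?thesis using assms by (rule UT_carrD2[rotated])
    next
      case False
      then have "n \<le> j" using \<open>\<not> i < n\<close> by simp
      then show ?thesis using assms by (rule UT_carrD3[rotated])
    qed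
    moreover have "(\<Oplus>k\<in>{..<n}. (if i = k \<and> i < n then \<one> else \<zero>) \<otimes> A k j) = \<zero>"
      by (rule finsum_zero_terms) (use False assms in \<open>auto simp: UT_carrD1\<close>)
    ultimately show ?thesis unfolding UT_mult_apply UT_one_apply by simp
  qed
qed

lemma UT_r_one: assumes "A \<in> carrier (UT n R)" shows "A \<otimes>\<^bsub>UT n R\<^esub> \<one>\<^bsub>UT n R\<^esub> = A"
proof (intro ext)
  fix i j
  show "(A \<otimes>\<^bsub>UT n R\<^esub> \<one>\<^bsub>UT n R\<^esub>) i j = A i j"
  proof (cases "j < n")
    case True
    have "(\<Oplus>k\<in>{..<n}. A i k \<otimes> (if k = j \<and> k < n then \<one> else \<zero>)) = A i j \<otimes> (if j = j \<and> j < n then \<one> else \<zero>)"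
      by (rule finsum_single_term) (use True assms in \<open>auto simp: UT_carrD1\<close>)
    then show ?thesis unfolding UT_mult_apply UT_one_apply using True assms by (simp add: UT_carrD1)
  next
    case False
    then have "A i j = \<zero>" using assms UT_carrD3 by simp
    moreover have "(\<Oplus>k\<in>{..<n}. A i k \<otimes> (if k = j \<and> k < n then \<one> else \<zero>)) = \<zero>"
      by (rule finsum_zero_terms) (use False assms in \<open>auto simp: UT_carrD1\<close>)
    ultimately show ?thesis unfolding UT_mult_apply UT_one_apply by simp
  qed
qed
end

context ring begin
lemma UT_m_assoc:
  assumes A: "A \<in> carrier (UT n R)" and B: "B \<in> carrier (UT n R)" and C: "C \<in> carrier (UT n R)"
  shows "(A \<otimes>\<^bsub>UT n R\<^esub> B) \<otimes>\<^bsub>UT n R\<^esub> C = A \<otimes>\<^bsub>UT n R\<^esub> (B \<otimes>\<^bsub>UT n R\<^esub> C)"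
proof (intro ext)
  fix i j
  have c: "\<And>i j. A i j \<in> carrier R" "\<And>i j. B i j \<in> carrier R" "\<And>i j. C i j \<in> carrier R"
    using A B C by (auto simp: UT_carrD1)
  have "((A \<otimes>\<^bsub>UT n R\<^esub> B) \<otimes>\<^bsub>UT n R\<^esub> C) i j = (\<Oplus>l\<in>{..<n}. (\<Oplus>k\<in>{..<n}. A i k \<otimes> B k l) \<otimes> C l j)"
    by (simp add: UT_mult_apply)
  also have "\<dots> = (\<Oplus>l\<in>{..<n}. \<Oplus>k\<in>{..<n}. A i k \<otimes> B k l \<otimes> C l j)"
    using c by (intro fcong finsum_ldistr) (auto intro!: finsum_closed)
  also have "\<dots> = (\<Oplus>k\<in>{..<n}. \<Oplus>l\<in>{..<n}. A i k \<otimes> B k l \<otimes> C l j)"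
    using c by (intro finsum_swap) auto
  also have "\<dots> = (\<Oplus>k\<in>{..<n}. A i k \<otimes> (\<Oplus>l\<in>{..<n}. B k l \<otimes> C l j))"
    using c by (intro fcong) (auto intro!: finsum_closed simp: finsum_rdistr Pi_def m_assoc)
  also have "\<dots> = (A \<otimes>\<^bsub>UT n R\<^esub> (B \<otimes>\<^bsub>UT n R\<^esub> C)) i j"
    by (simp add: UT_mult_apply)
  finally show "((A \<otimes>\<^bsub>UT n R\<^esub> B) \<otimes>\<^bsub>UT n R\<^esub> C) i j = (A \<otimes>\<^bsub>UT n R\<^esub> (B \<otimes>\<^bsub>UT n R\<^esub> C)) i j" .
qed

lemma UT_ring: "ring (UT n R)"
proof (rule ringI)
  show "abelian_group (UT n R)"
  proof (rule abelian_groupI)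
    fix x y z
    assume x: "x \<in> carrier (UT n R)" and y: "y \<in> carrier (UT n R)" and z: "z \<in> carrier (UT n R)"
    show "x \<oplus>\<^bsub>UT n R\<^esub> y \<oplus>\<^bsub>UT n R\<^esub> z = x \<oplus>\<^bsub>UT n R\<^esub> (y \<oplus>\<^bsub>UT n R\<^esub> z)"
      using x y z by (intro ext) (simp add: UT_add_apply UT_carrD1 a_assoc)
  next
    fix x y
    assume x: "x \<in> carrier (UT n R)" and y: "y \<in> carrier (UT n R)"
    show "x \<oplus>\<^bsub>UT n R\<^esub> y = y \<oplus>\<^bsub>UT n R\<^esub> x"
      using x y by (intro ext) (simp add: UT_add_apply UT_carrD1 a_comm)
  next
    fix x assume x: "x \<in> carrier (UT n R)"
    show "\<zero>\<^bsub>UT n R\<^esub> \<oplus>\<^bsub>UT n R\<^esub> x = x"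
      using x by (intro ext) (simp add: UT_add_apply UT_zero_apply UT_carrD1)
    show "\<exists>y\<in>carrier (UT n R). y \<oplus>\<^bsub>UT n R\<^esub> x = \<zero>\<^bsub>UT n R\<^esub>"
    proof (intro bexI)
      show "(\<lambda>i j. \<ominus> x i j) \<oplus>\<^bsub>UT n R\<^esub> x = \<zero>\<^bsub>UT n R\<^esub>"
        using x by (intro ext) (simp add: UT_add_apply UT_zero_apply UT_carrD1 l_neg)
      show "(\<lambda>i j. \<ominus> x i j) \<in> carrier (UT n R)"
        using x by (auto simp: UT_carrier_iff)
    qed
  qed (simp_all add: UT_add_closed UT_zero_closed)
next
  show "monoid (UT n R)"
    by (rule monoidI) (simp_all add: UT_mult_closed UT_one_closed UT_l_one UT_r_one UT_m_assoc)
next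
  fix x y z
  assume x: "x \<in> carrier (UT n R)" and y: "y \<in> carrier (UT n R)" and z: "z \<in> carrier (UT n R)"
  have c: "\<And>i j. x i j \<in> carrier R" "\<And>i j. y i j \<in> carrier R" "\<And>i j. z i j \<in> carrier R"
    using x y z by (auto simp: UT_carrD1)
  show "(x \<oplus>\<^bsub>UT n R\<^esub> y) \<otimes>\<^bsub>UT n R\<^esub> z = x \<otimes>\<^bsub>UT n R\<^esub> z \<oplus>\<^bsub>UT n R\<^esub> y \<otimes>\<^bsub>UT n R\<^esub> z"
  proof (intro ext)
    fix i j
    have "(\<Oplus>k\<in>{..<n}. (x i k \<oplus> y i k) \<otimes> z k j) = (\<Oplus>k\<in>{..<n}. x i k \<otimes> z k j \<oplus> y i k \<otimes> z k j)"
      by (rule fcong) (simp_all add: c l_distr)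
    also have "\<dots> = (\<Oplus>k\<in>{..<n}. x i k \<otimes> z k j) \<oplus> (\<Oplus>k\<in>{..<n}. y i k \<otimes> z k j)"
      by (rule finsum_addf) (auto simp: c)
    finally show "((x \<oplus>\<^bsub>UT n R\<^esub> y) \<otimes>\<^bsub>UT n R\<^esub> z) i j = (x \<otimes>\<^bsub>UT n R\<^esub> z \<oplus>\<^bsub>UT n R\<^esub> y \<otimes>\<^bsub>UT n R\<^esub> z) i j"
      by (simp add: UT_mult_apply UT_add_apply)
  qed
  show "z \<otimes>\<^bsub>UT n R\<^esub> (x \<oplus>\<^bsub>UT n R\<^esub> y) = z \<otimes>\<^bsub>UT n R\<^esub> x \<oplus>\<^bsub>UT n R\<^esub> z \<otimes>\<^bsub>UT n R\<^esub> y"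
  proof (intro ext)
    fix i j
    have "(\<Oplus>k\<in>{..<n}. z i k \<otimes> (x k j \<oplus> y k j)) = (\<Oplus>k\<in>{..<n}. z i k \<otimes> x k j \<oplus> z i k \<otimes> y k j)"
      by (rule fcong) (simp_all add: c r_distr)
    also have "\<dots> = (\<Oplus>k\<in>{..<n}. z i k \<otimes> x k j) \<oplus> (\<Oplus>k\<in>{..<n}. z i k \<otimes> y k j)"
      by (rule finsum_addf) (auto simp: c)
    finally show "(z \<otimes>\<^bsub>UT n R\<^esub> (x \<oplus>\<^bsub>UT n R\<^esub> y)) i j = (z \<otimes>\<^bsub>UT n R\<^esub> x \<oplus>\<^bsub>UT n R\<^esub> z \<otimes>\<^bsub>UT n R\<^esub> y) i j"
      by (simp add: UT_mult_apply UT_add_apply)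
  qed
qed

end

context ring begin

lemma ideal_crit:
  assumes "I \<subseteq> carrier R" "\<zero> \<in> I" "\<And>a b. a \<in> I \<Longrightarrow> b \<in> I \<Longrightarrow> a \<oplus> b \<in> I"
    "\<And>a x. a \<in> I \<Longrightarrow> x \<in> carrier R \<Longrightarrow> x \<otimes> a \<in> I"
    "\<And>a x. a \<in> I \<Longrightarrow> x \<in> carrier R \<Longrightarrow> a \<otimes> x \<in> I"
  shows "ideal I R"
proof (rule idealI)
  show "ring R" by (rule ring_axioms)
  show "subgroup I (add_monoid R)"
  proof (rule add.subgroupI)
    show "I \<subseteq> carrier R" using assms(1) by simp
    show "I \<noteq> {}" using assms(2) by blast
    fix a assume a: "a \<in> I"
    then have ac: "a \<in> carrier R" using assms(1) by blast
    have "\<ominus> a = \<ominus> \<one> \<otimes> a"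
      using ac by (simp add: l_minus)
    then show "\<ominus> a \<in> I" using assms(4)[OF a] by simp
  next
    fix a b assume "a \<in> I" "b \<in> I"
    then show "a \<oplus> b \<in> I" using assms(3) by simp
  qed
qed (use assms in auto)

lemma ideal_prod_subset:
  assumes "ideal K R" "\<And>a b. a \<in> I \<Longrightarrow> b \<in> J \<Longrightarrow> a \<otimes> b \<in> K"
  shows "ideal_prod R I J \<subseteq> K"
proof
  fix s assume "s \<in> ideal_prod R I J"
  then show "s \<in> K"
  proof (induction s rule: ideal_prod.induct)
    case (prod i j) then show ?case using assms(2) by blast
  next
    case (sum s1 s2) then show ?case
      using assms(1) by (simp add: additive_subgroup.a_closed ideal.axioms(1))
  qed
qed

lemma zero_in_prime_radical: "\<zero> \<in> prime_radical R"
  unfolding prime_radical_def nc_prime_ideal_def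
  by (auto intro: additive_subgroup.zero_closed ideal.axioms(1))

lemma prime_radical_sub: "x \<in> prime_radical R \<Longrightarrow> nc_prime_ideal P R \<Longrightarrow> x \<in> P"
  unfolding prime_radical_def by blast

lemma prime_radicalI: "x \<in> carrier R \<Longrightarrow> (\<And>P. nc_prime_ideal P R \<Longrightarrow> x \<in> P) \<Longrightarrow> x \<in> prime_radical R"
  unfolding prime_radical_def by blast

lemma prime_radical_carrier: "x \<in> prime_radical R \<Longrightarrow> x \<in> carrier R"
  unfolding prime_radical_def by blast

lemma UT_diag_mult:
  assumes "A \<in> carrier (UT n R)" "B \<in> carrier (UT n R)"
  shows "(A \<otimes>\<^bsub>UT n R\<^esub> B) l l = A l l \<otimes> B l l"
proof (cases "l < n")
  case True
  show ?thesis unfolding UT_mult_apply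
  proof (rule finsum_single_term)
    fix k assume "k \<in> {..<n}" "k \<noteq> l"
    then show "A l k \<otimes> B k l = \<zero>"
      by (cases "k < l") (use assms in \<open>simp_all add: UT_carrD1 UT_carrD2\<close>)
  qed (use True assms in \<open>auto simp: UT_carrD1\<close>)
next
  case False
  then have "(A \<otimes>\<^bsub>UT n R\<^esub> B) l l = \<zero>" "A l l = \<zero>"
    using UT_carrD3[OF UT_mult_closed[OF assms]] UT_carrD3[OF assms(1)] by auto
  then show ?thesis using UT_carrD1[OF assms(2)] by simp
qed

lemma diag_hom: "k < n \<Longrightarrow> ring_hom_ring (UT n R) R (\<lambda>A. A k k)"
  by (rule ring_hom_ringI[OF UT_ring ring_axioms])
     (simp_all add: UT_carrD1 UT_diag_mult UT_add_apply UT_one_apply)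

definition dk :: "nat \<Rightarrow> 'a \<Rightarrow> nat \<Rightarrow> nat \<Rightarrow> 'a" where
  "dk k r = (\<lambda>i j. if i = k \<and> j = k then r else \<zero>)"

lemma dk_carrier: "k < n \<Longrightarrow> r \<in> carrier R \<Longrightarrow> dk k r \<in> carrier (UT n R)"
  by (auto simp: dk_def UT_carrier_iff)

lemma dk_zero: "dk k \<zero> = \<zero>\<^bsub>UT n R\<^esub>"
  by (intro ext) (simp add: dk_def UT_zero_apply)

lemma dk_add: "r \<in> carrier R \<Longrightarrow> s \<in> carrier R \<Longrightarrow> dk k (r \<oplus> s) = dk k r \<oplus>\<^bsub>UT n R\<^esub> dk k s"
  by (intro ext) (simp add: dk_def UT_add_apply)

lemma dk_mult:
  assumes "k < n" "r \<in> carrier R" "s \<in> carrier R"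
  shows "dk k (r \<otimes> s) = dk k r \<otimes>\<^bsub>UT n R\<^esub> dk k s"
proof (intro ext)
  fix i j
  have "(dk k r \<otimes>\<^bsub>UT n R\<^esub> dk k s) i j = dk k r i k \<otimes> dk k s k j"
    unfolding UT_mult_apply
    by (rule finsum_single_term) (use assms in \<open>auto simp: dk_def\<close>)
  then show "dk k (r \<otimes> s) i j = (dk k r \<otimes>\<^bsub>UT n R\<^esub> dk k s) i j"
    using assms by (auto simp: dk_def)
qed

end

context ring begin

lemma UT_radical_diag:
  assumes "A \<in> prime_radical (UT n R)" "k < n"
  shows "A k k \<in> prime_radical R"
proof -
  interpret U: ring "UT n R" by (rule UT_ring)
  have Ac: "A \<in> carrier (UT n R)" using U.prime_radical_carrier assms(1) .
  show ?thesis
  proof (rule prime_radicalI)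
    show "A k k \<in> carrier R" using Ac by (rule UT_carrD1)
    fix P assume P: "nc_prime_ideal P R"
    have PI: "ideal P R" "P \<noteq> carrier R"
      and Pprime: "\<And>I J. ideal I R \<Longrightarrow> ideal J R \<Longrightarrow> ideal_prod R I J \<subseteq> P \<Longrightarrow> I \<subseteq> P \<or> J \<subseteq> P"
      using P unfolding nc_prime_ideal_def by blast+
    define Q where "Q = {B \<in> carrier (UT n R). B k k \<in> P}"
    have hom: "ring_hom_ring (UT n R) R (\<lambda>A. A k k)" by (rule diag_hom) (rule assms(2))
    have Qi: "ideal Q (UT n R)" unfolding Q_def by (rule ring_hom_ring.ideal_vimage[OF hom PI(1)])
    have "\<one> \<notin> P" using PI ideal.one_imp_carrier by blast
    moreover have "\<one>\<^bsub>UT n R\<^esub> k k = \<one>" using assms(2) by (simp add: UT_one_apply)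
    ultimately have "\<one>\<^bsub>UT n R\<^esub> \<notin> Q" unfolding Q_def by simp
    then have QN: "Q \<noteq> carrier (UT n R)" using U.one_closed by blast
    have idl: "ideal ((\<lambda>B. B k k) ` I) R" if I: "ideal I (UT n R)" for I
    proof (rule ideal_crit)
      show "(\<lambda>B. B k k) ` I \<subseteq> carrier R" using ideal.Icarr[OF I] UT_carrD1 by blast
      have "\<zero>\<^bsub>UT n R\<^esub> \<in> I" by (rule additive_subgroup.zero_closed[OF ideal.axioms(1)[OF I]])
      moreover have "\<zero>\<^bsub>UT n R\<^esub> k k = \<zero>" by (simp add: UT_zero_apply)
      ultimately show "\<zero> \<in> (\<lambda>B. B k k) ` I" by (metis image_eqI)
    next
      fix a b assume "a \<in> (\<lambda>B. B k k) ` I" "b \<in> (\<lambda>B. B k k) ` I"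
      then obtain B C where BC: "B \<in> I" "C \<in> I" "a = B k k" "b = C k k" by blast
      then have "B \<oplus>\<^bsub>UT n R\<^esub> C \<in> I"
        by (simp add: additive_subgroup.a_closed[OF ideal.axioms(1)[OF I]])
      moreover have "(B \<oplus>\<^bsub>UT n R\<^esub> C) k k = a \<oplus> b" using BC by (simp add: UT_add_apply)
      ultimately show "a \<oplus> b \<in> (\<lambda>B. B k k) ` I" by (metis image_eqI)
    next
      fix a x assume "a \<in> (\<lambda>B. B k k) ` I" and x: "x \<in> carrier R"
      then obtain B where B: "B \<in> I" "a = B k k" by blast
      have Bc: "B \<in> carrier (UT n R)" using ideal.Icarr[OF I B(1)] .
      have dc: "dk k x \<in> carrier (UT n R)" using dk_carrier[OF assms(2) x] .
      have "dk k x \<otimes>\<^bsub>UT n R\<^esub> B \<in> I" using ideal.I_l_closed[OF I B(1) dc] .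
      moreover have "(dk k x \<otimes>\<^bsub>UT n R\<^esub> B) k k = x \<otimes> a"
        using UT_diag_mult[OF dc Bc] B by (simp add: dk_def)
      ultimately show "x \<otimes> a \<in> (\<lambda>B. B k k) ` I" by (metis image_eqI)
      have "B \<otimes>\<^bsub>UT n R\<^esub> dk k x \<in> I" using ideal.I_r_closed[OF I B(1) dc] .
      moreover have "(B \<otimes>\<^bsub>UT n R\<^esub> dk k x) k k = a \<otimes> x"
        using UT_diag_mult[OF Bc dc] B by (simp add: dk_def)
      ultimately show "a \<otimes> x \<in> (\<lambda>B. B k k) ` I" by (metis image_eqI)
    qed
    have Qp: "I \<subseteq> Q \<or> J \<subseteq> Q"
      if I: "ideal I (UT n R)" and J: "ideal J (UT n R)" and IJ: "ideal_prod (UT n R) I J \<subseteq> Q" for I J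
    proof -
      have "ideal_prod R ((\<lambda>B. B k k) ` I) ((\<lambda>B. B k k) ` J) \<subseteq> P"
      proof (rule ideal_prod_subset[OF PI(1)])
        fix a b assume "a \<in> (\<lambda>B. B k k) ` I" "b \<in> (\<lambda>B. B k k) ` J"
        then obtain B C where BC: "B \<in> I" "C \<in> J" "a = B k k" "b = C k k" by blast
        have "B \<otimes>\<^bsub>UT n R\<^esub> C \<in> Q" using IJ ideal_prod.prod[OF BC(1,2)] by blast
        moreover have "(B \<otimes>\<^bsub>UT n R\<^esub> C) k k = a \<otimes> b"
          using UT_diag_mult ideal.Icarr[OF I BC(1)] ideal.Icarr[OF J BC(2)] BC by simp
        ultimately show "a \<otimes> b \<in> P" unfolding Q_def by simp
      qed
      then have "(\<lambda>B. B k k) ` I \<subseteq> P \<or> (\<lambda>B. B k k) ` J \<subseteq> P"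
        using Pprime idl[OF I] idl[OF J] by blast
      then show ?thesis using ideal.Icarr[OF I] ideal.Icarr[OF J] unfolding Q_def by blast
    qed
    have "nc_prime_ideal Q (UT n R)"
      unfolding nc_prime_ideal_def using Qi QN Qp by blast
    then have "A \<in> Q" using U.prime_radical_sub assms(1) by blast
    then show "A k k \<in> P" unfolding Q_def by simp
  qed
qed

end

context ring begin

definition Jm :: "nat \<Rightarrow> nat \<Rightarrow> (nat \<Rightarrow> nat \<Rightarrow> 'a) set" where
  "Jm n m = {A \<in> carrier (UT n R). \<forall>i j. j < i + m \<longrightarrow> A i j = \<zero>}"

lemma Jm_ideal: "ideal (Jm n m) (UT n R)"
proof -
  interpret U: ring "UT n R" by (rule UT_ring)
  show ?thesis
  proof (rule U.ideal_crit)
    show "Jm n m \<subseteq> carrier (UT n R)" unfolding Jm_def by blast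
    show "\<zero>\<^bsub>UT n R\<^esub> \<in> Jm n m" unfolding Jm_def by (simp add: UT_zero_apply)
  next
    fix a b assume "a \<in> Jm n m" "b \<in> Jm n m"
    then show "a \<oplus>\<^bsub>UT n R\<^esub> b \<in> Jm n m" unfolding Jm_def by (simp add: UT_add_apply)
  next
    fix a x assume a: "a \<in> Jm n m" and x: "x \<in> carrier (UT n R)"
    have ac: "a \<in> carrier (UT n R)" using a unfolding Jm_def by blast
    have az: "\<And>i j. j < i + m \<Longrightarrow> a i j = \<zero>" using a unfolding Jm_def by blast
    have "\<forall>i j. j < i + m \<longrightarrow> (x \<otimes>\<^bsub>UT n R\<^esub> a) i j = \<zero>"
    proof (intro allI impI)
      fix i j assume ij: "j < i + m"
      show "(x \<otimes>\<^bsub>UT n R\<^esub> a) i j = \<zero>" unfolding UT_mult_apply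
      proof (rule finsum_zero_terms)
        fix l show "x i l \<otimes> a l j = \<zero>"
        proof (cases "l < i")
          case True then show ?thesis using x ac by (simp add: UT_carrD1 UT_carrD2)
        next
          case False then have "a l j = \<zero>" using ij az by simp
          then show ?thesis using x by (simp add: UT_carrD1)
        qed
      qed
    qed
    then show "x \<otimes>\<^bsub>UT n R\<^esub> a \<in> Jm n m" unfolding Jm_def using U.m_closed[OF x ac] by blast
    have "\<forall>i j. j < i + m \<longrightarrow> (a \<otimes>\<^bsub>UT n R\<^esub> x) i j = \<zero>"
    proof (intro allI impI)
      fix i j assume ij: "j < i + m"
      show "(a \<otimes>\<^bsub>UT n R\<^esub> x) i j = \<zero>" unfolding UT_mult_apply
      proof (rule finsum_zero_terms)
        fix l show "a i l \<otimes> x l j = \<zero>"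
        proof (cases "j < l")
          case True then show ?thesis using x ac by (simp add: UT_carrD1 UT_carrD2)
        next
          case False then have "a i l = \<zero>" using ij az by simp
          then show ?thesis using x by (simp add: UT_carrD1)
        qed
      qed
    qed
    then show "a \<otimes>\<^bsub>UT n R\<^esub> x \<in> Jm n m" unfolding Jm_def using U.m_closed[OF ac x] by blast
  qed
qed

lemma Jm_prod:
  assumes "1 \<le> m"
  shows "ideal_prod (UT n R) (Jm n m) (Jm n m) \<subseteq> Jm n (Suc m)"
proof -
  interpret U: ring "UT n R" by (rule UT_ring)
  show ?thesis
  proof (rule U.ideal_prod_subset[OF Jm_ideal])
    fix a b assume a: "a \<in> Jm n m" and b: "b \<in> Jm n m"
    have ac: "a \<in> carrier (UT n R)" and az: "\<And>i j. j < i + m \<Longrightarrow> a i j = \<zero>"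
      using a unfolding Jm_def by blast+
    have bc: "b \<in> carrier (UT n R)" and bz: "\<And>i j. j < i + m \<Longrightarrow> b i j = \<zero>"
      using b unfolding Jm_def by blast+
    have "\<forall>i j. j < i + Suc m \<longrightarrow> (a \<otimes>\<^bsub>UT n R\<^esub> b) i j = \<zero>"
    proof (intro allI impI)
      fix i j assume ij: "j < i + Suc m"
      show "(a \<otimes>\<^bsub>UT n R\<^esub> b) i j = \<zero>" unfolding UT_mult_apply
      proof (rule finsum_zero_terms)
        fix l show "a i l \<otimes> b l j = \<zero>"
        proof (cases "l < i + m")
          case True then show ?thesis using az bc by (simp add: UT_carrD1)
        next
          case False then have "b l j = \<zero>" using ij bz assms by simp
          then show ?thesis using ac by (simp add: UT_carrD1)
        qed
      qed
    qed
    then show "a \<otimes>\<^bsub>UT n R\<^esub> b \<in> Jm n (Suc m)" unfolding Jm_def using U.m_closed[OF ac bc] by blast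
  qed
qed

lemma Jm_big:
  assumes "n \<le> m" "A \<in> Jm n m"
  shows "A = \<zero>\<^bsub>UT n R\<^esub>"
proof (intro ext)
  fix i j
  have ac: "A \<in> carrier (UT n R)" and az: "\<And>i j. j < i + m \<Longrightarrow> A i j = \<zero>"
    using assms(2) unfolding Jm_def by blast+
  show "A i j = \<zero>\<^bsub>UT n R\<^esub> i j"
  proof (cases "j < n")
    case True then show ?thesis using az assms(1) by (simp add: UT_zero_apply)
  next
    case False then show ?thesis using ac by (simp add: UT_zero_apply UT_carrD3)
  qed
qed

lemma Jm_in_prime:
  assumes Q: "nc_prime_ideal Q (UT n R)" and m: "1 \<le> m"
  shows "Jm n m \<subseteq> Q"
  using m
proof (induction "n - m" arbitrary: m)
  case 0
  have QI: "ideal Q (UT n R)" using Q unfolding nc_prime_ideal_def by blast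
  have "\<zero>\<^bsub>UT n R\<^esub> \<in> Q" by (rule additive_subgroup.zero_closed[OF ideal.axioms(1)[OF QI]])
  then show ?case using Jm_big[of n m] 0 by auto
next
  case (Suc d)
  then have "Jm n (Suc m) \<subseteq> Q" by simp
  then have "ideal_prod (UT n R) (Jm n m) (Jm n m) \<subseteq> Q" using Jm_prod[OF Suc.prems] by blast
  then show ?case using Q Jm_ideal unfolding nc_prime_ideal_def by blast
qed

end

context ring begin

lemma decomp:
  assumes QI: "ideal Q (UT n R)" and J1: "Jm n 1 \<subseteq> Q" and C: "C \<in> carrier (UT n R)"
    and D: "\<And>l. l < n \<Longrightarrow> dk l (C l l) \<in> Q"
  shows "C \<in> Q"
proof -
  interpret U: ring "UT n R" by (rule UT_ring)
  have Cc: "\<And>i j. C i j \<in> carrier R" using C by (rule UT_carrD1)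
  have aclosed: "\<And>a b. a \<in> Q \<Longrightarrow> b \<in> Q \<Longrightarrow> a \<oplus>\<^bsub>UT n R\<^esub> b \<in> Q"
    by (rule additive_subgroup.a_closed[OF ideal.axioms(1)[OF QI]])
  define Dm where "Dm m = (\<lambda>i j. if i = j \<and> i < m then C i i else \<zero>)" for m
  have DmQ: "Dm m \<in> Q" if "m \<le> n" for m
    using that
  proof (induction m)
    case 0
    have "Dm 0 = \<zero>\<^bsub>UT n R\<^esub>" by (intro ext) (simp add: Dm_def UT_zero_apply)
    then show ?case using additive_subgroup.zero_closed[OF ideal.axioms(1)[OF QI]] by simp
  next
    case (Suc m)
    have "Dm (Suc m) = Dm m \<oplus>\<^bsub>UT n R\<^esub> dk m (C m m)"
    proof (intro ext)
      fix i j
      show "Dm (Suc m) i j = (Dm m \<oplus>\<^bsub>UT n R\<^esub> dk m (C m m)) i j"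
        by (cases "i = j"; cases "i < m"; cases "i = m") (auto simp: Dm_def dk_def UT_add_apply Cc)
    qed
    then show ?case using Suc aclosed D by simp
  qed
  define S where "S = (\<lambda>i j. if i = j then \<zero> else C i j)"
  have "S \<in> Jm n 1"
    unfolding Jm_def S_def UT_carrier_iff using Cc UT_carrD2[OF C] UT_carrD3[OF C]
    by (auto simp: less_Suc_eq)
  then have SQ: "S \<in> Q" using J1 by blast
  have "C = S \<oplus>\<^bsub>UT n R\<^esub> Dm n"
  proof (intro ext)
    fix i j
    show "C i j = (S \<oplus>\<^bsub>UT n R\<^esub> Dm n) i j"
    proof (cases "i = j")
      case True
      then show ?thesis using UT_carrD3[OF C, of i i] by (cases "i < n") (auto simp: S_def Dm_def UT_add_apply Cc)
    next
      case False
      then show ?thesis by (simp add: S_def Dm_def UT_add_apply Cc)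
    qed
  qed
  then show ?thesis using aclosed[OF SQ DmQ[OF order_refl]] by simp
qed

lemma prime_radical_sub_dk:
  assumes Q: "nc_prime_ideal Q (UT n R)" and k: "k < n" and r: "r \<in> prime_radical R"
  shows "dk k r \<in> Q"
proof -
  interpret U: ring "UT n R" by (rule UT_ring)
  have QI: "ideal Q (UT n R)"
    and Qprime: "\<And>I J. ideal I (UT n R) \<Longrightarrow> ideal J (UT n R) \<Longrightarrow> ideal_prod (UT n R) I J \<subseteq> Q \<Longrightarrow> I \<subseteq> Q \<or> J \<subseteq> Q"
    using Q unfolding nc_prime_ideal_def by blast+
  have J1: "Jm n 1 \<subseteq> Q" using Jm_in_prime[OF Q] by simp
  define P where "P = {r \<in> carrier R. dk k r \<in> Q}"
  have PI: "ideal P R"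
  proof (rule ideal_crit)
    show "P \<subseteq> carrier R" unfolding P_def by blast
    show "\<zero> \<in> P" unfolding P_def using additive_subgroup.zero_closed[OF ideal.axioms(1)[OF QI]]
      by (simp add: dk_zero[of k n])
  next
    fix a b assume "a \<in> P" "b \<in> P"
    then have ab: "a \<in> carrier R" "dk k a \<in> Q" "b \<in> carrier R" "dk k b \<in> Q" unfolding P_def by auto
    then show "a \<oplus> b \<in> P" unfolding P_def
      using dk_add[of a b k n] additive_subgroup.a_closed[OF ideal.axioms(1)[OF QI] ab(2,4)] by simp
  next
    fix a x assume a: "a \<in> P" and x: "x \<in> carrier R"
    have ac: "a \<in> carrier R" and aQ: "dk k a \<in> Q" using a unfolding P_def by blast+
    show "x \<otimes> a \<in> P" unfolding P_def
      using dk_mult[OF k x ac] ideal.I_l_closed[OF QI aQ dk_carrier[OF k x]] x ac by simp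
    show "a \<otimes> x \<in> P" unfolding P_def
      using dk_mult[OF k ac x] ideal.I_r_closed[OF QI aQ dk_carrier[OF k x]] x ac by simp
  qed
  have Pp: "I \<subseteq> P \<or> J \<subseteq> P" if I: "ideal I R" and J: "ideal J R" and IJ: "ideal_prod R I J \<subseteq> P" for I J
  proof -
    define hat where "hat I = {A \<in> carrier (UT n R). A k k \<in> I \<and> (\<forall>l. l \<noteq> k \<longrightarrow> A l l = \<zero>)}" for I
    have hatI: "ideal (hat I) (UT n R)" if I: "ideal I R" for I
    proof (rule U.ideal_crit)
      show "hat I \<subseteq> carrier (UT n R)" unfolding hat_def by blast
      show "\<zero>\<^bsub>UT n R\<^esub> \<in> hat I" unfolding hat_def
        using additive_subgroup.zero_closed[OF ideal.axioms(1)[OF I]] by (simp add: UT_zero_apply)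
    next
      fix a b assume "a \<in> hat I" "b \<in> hat I"
      then show "a \<oplus>\<^bsub>UT n R\<^esub> b \<in> hat I" unfolding hat_def
        by (simp add: UT_add_apply additive_subgroup.a_closed[OF ideal.axioms(1)[OF I]])
    next
      fix a x assume a: "a \<in> hat I" and x: "x \<in> carrier (UT n R)"
      have ac: "a \<in> carrier (UT n R)" and ak: "a k k \<in> I" and al: "\<And>l. l \<noteq> k \<Longrightarrow> a l l = \<zero>"
        using a unfolding hat_def by blast+
      show "x \<otimes>\<^bsub>UT n R\<^esub> a \<in> hat I" unfolding hat_def
        using U.m_closed[OF x ac] UT_diag_mult[OF x ac] ideal.I_l_closed[OF I ak UT_carrD1[OF x]] al
          UT_carrD1[OF x] by simp
      show "a \<otimes>\<^bsub>UT n R\<^esub> x \<in> hat I" unfolding hat_def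
        using U.m_closed[OF ac x] UT_diag_mult[OF ac x] ideal.I_r_closed[OF I ak UT_carrD1[OF x]] al
          UT_carrD1[OF x] by simp
    qed
    have "ideal_prod (UT n R) (hat I) (hat J) \<subseteq> Q"
    proof (rule U.ideal_prod_subset[OF QI])
      fix a b assume a: "a \<in> hat I" and b: "b \<in> hat J"
      have ac: "a \<in> carrier (UT n R)" and ak: "a k k \<in> I" and al: "\<And>l. l \<noteq> k \<Longrightarrow> a l l = \<zero>"
        using a unfolding hat_def by blast+
      have bc: "b \<in> carrier (UT n R)" and bk: "b k k \<in> J" and bl: "\<And>l. l \<noteq> k \<Longrightarrow> b l l = \<zero>"
        using b unfolding hat_def by blast+
      show "a \<otimes>\<^bsub>UT n R\<^esub> b \<in> Q"
      proof (rule decomp[OF QI J1 U.m_closed[OF ac bc]])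
        fix l assume l: "l < n"
        show "dk l ((a \<otimes>\<^bsub>UT n R\<^esub> b) l l) \<in> Q"
        proof (cases "l = k")
          case True
          have "a k k \<otimes> b k k \<in> ideal_prod R I J" by (rule ideal_prod.prod[OF ak bk])
          then have "a k k \<otimes> b k k \<in> P" using IJ by blast
          then show ?thesis unfolding P_def using True UT_diag_mult[OF ac bc] by simp
        next
          case False
          then have "(a \<otimes>\<^bsub>UT n R\<^esub> b) l l = \<zero>"
            using UT_diag_mult[OF ac bc] al UT_carrD1[OF bc] by simp
          then show ?thesis
            using additive_subgroup.zero_closed[OF ideal.axioms(1)[OF QI]] by (simp add: dk_zero[of l n])
        qed
      qed
    qed
    then have "hat I \<subseteq> Q \<or> hat J \<subseteq> Q" using Qprime hatI[OF I] hatI[OF J] by blast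
    moreover have "K \<subseteq> P" if K: "ideal K R" and KQ: "hat K \<subseteq> Q" for K
    proof
      fix x assume x: "x \<in> K"
      have xc: "x \<in> carrier R" using ideal.Icarr[OF K x] .
      have "dk k x \<in> hat K"
        unfolding hat_def using dk_carrier[OF k xc] x by (auto simp: dk_def)
      then show "x \<in> P" unfolding P_def using xc KQ by blast
    qed
    ultimately show ?thesis using I J by blast
  qed
  show ?thesis
  proof (cases "P = carrier R")
    case True
    then show ?thesis using r prime_radical_carrier unfolding P_def by blast
  next
    case False
    then have "nc_prime_ideal P R" unfolding nc_prime_ideal_def using PI Pp by blast
    then show ?thesis using r prime_radical_sub unfolding P_def by blast
  qed
qed

lemma UT_diag_radical:
  assumes A: "A \<in> carrier (UT n R)" and D: "\<And>k. k < n \<Longrightarrow> A k k \<in> prime_radical R"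
  shows "A \<in> prime_radical (UT n R)"
proof -
  interpret U: ring "UT n R" by (rule UT_ring)
  show ?thesis
  proof (rule U.prime_radicalI[OF A])
    fix Q assume Q: "nc_prime_ideal Q (UT n R)"
    have QI: "ideal Q (UT n R)" using Q unfolding nc_prime_ideal_def by blast
    show "A \<in> Q"
      by (rule decomp[OF QI _ A]) (use Jm_in_prime[OF Q] prime_radical_sub_dk[OF Q _ D] in auto)
  qed
qed

end

context ring begin

lemma UP_carrier_eq: "carrier (UP R) = up R" by (simp add: UP_def)
lemma UP_coeff_eq: "f \<in> up R \<Longrightarrow> coeff (UP R) f i = f i" by (simp add: UP_def)
lemma UP_mult_eq: "f \<in> up R \<Longrightarrow> g \<in> up R \<Longrightarrow> (f \<otimes>\<^bsub>UP R\<^esub> g) m = (\<Oplus>i\<in>{..m}. f i \<otimes> g (m - i))"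
  by (simp add: UP_def)
lemma UP_zero_eq: "\<zero>\<^bsub>UP R\<^esub> = (\<lambda>i. \<zero>)" by (simp add: UP_def)

lemma AA_iff:
  "almost_armendariz R \<longleftrightarrow>
     (\<forall>f \<in> up R. \<forall>g \<in> up R. f \<otimes>\<^bsub>UP R\<^esub> g = (\<lambda>i. \<zero>) \<longrightarrow> (\<forall>i j. f i \<otimes> g j \<in> prime_radical R))"
proof -
  interpret P: UP_ring R "UP R" by unfold_locales simp
  show ?thesis
  proof
    assume AA: "almost_armendariz R"
    show "\<forall>f \<in> up R. \<forall>g \<in> up R. f \<otimes>\<^bsub>UP R\<^esub> g = (\<lambda>i. \<zero>) \<longrightarrow> (\<forall>i j. f i \<otimes> g j \<in> prime_radical R)"
    proof (intro ballI impI allI)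
      fix f g i j assume f: "f \<in> up R" and g: "g \<in> up R" and fg: "f \<otimes>\<^bsub>UP R\<^esub> g = (\<lambda>i. \<zero>)"
      have fc: "f \<in> carrier (UP R)" and gc: "g \<in> carrier (UP R)" using f g by (simp_all add: UP_carrier_eq)
      show "f i \<otimes> g j \<in> prime_radical R"
      proof (cases "i \<le> deg R f \<and> j \<le> deg R g")
        case True
        then have "coeff (UP R) f i \<otimes> coeff (UP R) g j \<in> prime_radical R"
          using AA fc gc fg unfolding almost_armendariz_def UP_zero_eq by blast
        then show ?thesis using UP_coeff_eq[OF f] UP_coeff_eq[OF g] by simp
      next
        case False
        then have "f i = \<zero> \<or> g j = \<zero>"
          using P.deg_aboveD[OF _ fc, of i] P.deg_aboveD[OF _ gc, of j] f g
          by (auto simp: UP_coeff_eq not_le)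
        then have "f i \<otimes> g j = \<zero>" using mem_upD[OF f, of i] mem_upD[OF g, of j] by auto
        then show ?thesis using zero_in_prime_radical by simp
      qed
    qed
  next
    assume H: "\<forall>f \<in> up R. \<forall>g \<in> up R. f \<otimes>\<^bsub>UP R\<^esub> g = (\<lambda>i. \<zero>) \<longrightarrow> (\<forall>i j. f i \<otimes> g j \<in> prime_radical R)"
    show "almost_armendariz R" unfolding almost_armendariz_def
      using H by (auto simp: UP_zero_eq UP_coeff_eq UP_carrier_eq)
  qed
qed

end

context ring begin

lemma dir1:
  assumes AR: "almost_armendariz R"
  shows "almost_armendariz (UT n R)"
proof -
  interpret U: ring "UT n R" by (rule UT_ring)
  have HR: "\<And>f g i j. f \<in> up R \<Longrightarrow> g \<in> up R \<Longrightarrow> f \<otimes>\<^bsub>UP R\<^esub> g = (\<lambda>i. \<zero>) \<Longrightarrow> f i \<otimes> g j \<in> prime_radical R"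
    using AR AA_iff by blast
  show ?thesis unfolding U.AA_iff
  proof (intro ballI impI allI)
    fix F G i j assume F: "F \<in> up (UT n R)" and G: "G \<in> up (UT n R)"
      and FG: "F \<otimes>\<^bsub>UP (UT n R)\<^esub> G = (\<lambda>i. \<zero>\<^bsub>UT n R\<^esub>)"
    have Fc: "\<And>m. F m \<in> carrier (UT n R)" using F by (rule mem_upD)
    have Gc: "\<And>m. G m \<in> carrier (UT n R)" using G by (rule mem_upD)
    show "F i \<otimes>\<^bsub>UT n R\<^esub> G j \<in> prime_radical (UT n R)"
    proof (rule UT_diag_radical)
      show "F i \<otimes>\<^bsub>UT n R\<^esub> G j \<in> carrier (UT n R)" using Fc Gc by simp
      fix k assume k: "k < n"
      define f where "f = (\<lambda>m. F m k k)"
      define g where "g = (\<lambda>m. G m k k)"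
      have fu: "f \<in> up R"
      proof (rule mem_upI)
        show "\<And>m. f m \<in> carrier R" unfolding f_def using Fc UT_carrD1 by blast
        obtain N where N: "bound \<zero>\<^bsub>UT n R\<^esub> N F" using U.bound_upD[OF F] by blast
        have "bound \<zero> N f"
        proof
          fix m assume "N < m" then have "F m = \<zero>\<^bsub>UT n R\<^esub>" by (rule bound.bound[OF N])
          then show "f m = \<zero>" unfolding f_def by (simp add: UT_zero_apply)
        qed
        then show "\<exists>N. bound \<zero>\<^bsub>R\<^esub> N f" by blast
      qed
      have gu: "g \<in> up R"
      proof (rule mem_upI)
        show "\<And>m. g m \<in> carrier R" unfolding g_def using Gc UT_carrD1 by blast
        obtain N where N: "bound \<zero>\<^bsub>UT n R\<^esub> N G" using U.bound_upD[OF G] by blast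
        have "bound \<zero> N g"
        proof
          fix m assume "N < m" then have "G m = \<zero>\<^bsub>UT n R\<^esub>" by (rule bound.bound[OF N])
          then show "g m = \<zero>" unfolding g_def by (simp add: UT_zero_apply)
        qed
        then show "\<exists>N. bound \<zero>\<^bsub>R\<^esub> N g" by blast
      qed
      have hom: "ring_hom_ring (UT n R) R (\<lambda>A. A k k)" using k by (rule diag_hom)
      have "f \<otimes>\<^bsub>UP R\<^esub> g = (\<lambda>i. \<zero>)"
      proof (intro ext)
        fix m
        have "(f \<otimes>\<^bsub>UP R\<^esub> g) m = (\<Oplus>i\<in>{..m}. f i \<otimes> g (m - i))" by (rule UP_mult_eq[OF fu gu])
        also have "\<dots> = (\<Oplus>i\<in>{..m}. ((\<lambda>A. A k k) \<circ> (\<lambda>i. F i \<otimes>\<^bsub>UT n R\<^esub> G (m - i))) i)"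
          by (rule fcong) (simp_all add: f_def g_def UT_diag_mult Fc Gc UT_carrD1[OF Fc] UT_carrD1[OF Gc])
        also have "\<dots> = (\<Oplus>\<^bsub>UT n R\<^esub>i\<in>{..m}. F i \<otimes>\<^bsub>UT n R\<^esub> G (m - i)) k k"
          using ring_hom_ring.hom_finsum[OF hom, of "\<lambda>i. F i \<otimes>\<^bsub>UT n R\<^esub> G (m - i)" "{..m}"] Fc Gc
          by (simp add: Pi_def comp_def)
        also have "\<dots> = (F \<otimes>\<^bsub>UP (UT n R)\<^esub> G) m k k" by (simp add: U.UP_mult_eq[OF F G])
        also have "\<dots> = \<zero>" using FG by (simp add: UT_zero_apply)
        finally show "(f \<otimes>\<^bsub>UP R\<^esub> g) m = \<zero>" .
      qed
      then have "f i \<otimes> g j \<in> prime_radical R" using HR fu gu by blast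
      then show "(F i \<otimes>\<^bsub>UT n R\<^esub> G j) k k \<in> prime_radical R"
        using UT_diag_mult[OF Fc Gc] unfolding f_def g_def by simp
    qed
  qed
qed

definition sc :: "nat \<Rightarrow> 'a \<Rightarrow> nat \<Rightarrow> nat \<Rightarrow> 'a" where
  "sc n r = (\<lambda>i j. if i = j \<and> i < n then r else \<zero>)"

lemma sc_hom: "ring_hom_ring R (UT n R) (sc n)"
proof (rule ring_hom_ringI[OF ring_axioms UT_ring])
  fix x assume "x \<in> carrier R" then show "sc n x \<in> carrier (UT n R)"
    by (auto simp: sc_def UT_carrier_iff)
next
  fix x y assume x: "x \<in> carrier R" and y: "y \<in> carrier R"
  show "sc n (x \<oplus> y) = sc n x \<oplus>\<^bsub>UT n R\<^esub> sc n y"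
    by (intro ext) (simp add: sc_def UT_add_apply)
  show "sc n (x \<otimes> y) = sc n x \<otimes>\<^bsub>UT n R\<^esub> sc n y"
  proof (intro ext)
    fix i j
    show "sc n (x \<otimes> y) i j = (sc n x \<otimes>\<^bsub>UT n R\<^esub> sc n y) i j"
    proof (cases "i < n")
      case True
      have "(\<Oplus>l\<in>{..<n}. sc n x i l \<otimes> sc n y l j) = sc n x i i \<otimes> sc n y i j"
        by (rule finsum_single_term) (use True x y in \<open>auto simp: sc_def\<close>)
      then show ?thesis using True x y by (auto simp: sc_def UT_mult_apply)
    next
      case False
      have "(\<Oplus>l\<in>{..<n}. sc n x i l \<otimes> sc n y l j) = \<zero>"
        by (rule finsum_zero_terms) (use False x y in \<open>auto simp: sc_def\<close>)
      then show ?thesis using False by (auto simp: sc_def UT_mult_apply)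
    qed
  qed
next
  show "sc n \<one> = \<one>\<^bsub>UT n R\<^esub>" by (intro ext) (simp add: sc_def UT_one_apply)
qed

lemma dir2:
  assumes AU: "almost_armendariz (UT n R)" and n: "1 \<le> n"
  shows "almost_armendariz R"
proof -
  interpret U: ring "UT n R" by (rule UT_ring)
  have HU: "\<And>F G i j. F \<in> up (UT n R) \<Longrightarrow> G \<in> up (UT n R) \<Longrightarrow> F \<otimes>\<^bsub>UP (UT n R)\<^esub> G = (\<lambda>i. \<zero>\<^bsub>UT n R\<^esub>)
      \<Longrightarrow> F i \<otimes>\<^bsub>UT n R\<^esub> G j \<in> prime_radical (UT n R)"
    using AU U.AA_iff by blast
  have hom: "ring_hom_ring R (UT n R) (sc n)" by (rule sc_hom)
  have hh: "sc n \<in> ring_hom R (UT n R)" by (rule ring_hom_ring.homh[OF hom])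
  have sc0: "sc n \<zero> = \<zero>\<^bsub>UT n R\<^esub>" by (intro ext) (simp add: sc_def UT_zero_apply)
  have scup: "(\<lambda>m. sc n (f m)) \<in> up (UT n R)" if f: "f \<in> up R" for f
  proof (rule mem_upI)
    show "\<And>m. sc n (f m) \<in> carrier (UT n R)"
      using ring_hom_closed[OF hh] mem_upD[OF f] by blast
    obtain N where N: "bound \<zero> N f" using bound_upD[OF f] by blast
    have "bound \<zero>\<^bsub>UT n R\<^esub> N (\<lambda>m. sc n (f m))"
    proof
      fix m assume "N < m" then have "f m = \<zero>" by (rule bound.bound[OF N])
      then show "sc n (f m) = \<zero>\<^bsub>UT n R\<^esub>" using sc0 by simp
    qed
    then show "\<exists>N. bound \<zero>\<^bsub>UT n R\<^esub> N (\<lambda>m. sc n (f m))" by blast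
  qed
  show ?thesis unfolding AA_iff
  proof (intro ballI impI allI)
    fix f g i j assume f: "f \<in> up R" and g: "g \<in> up R" and fg: "f \<otimes>\<^bsub>UP R\<^esub> g = (\<lambda>i. \<zero>)"
    have fc: "\<And>m. f m \<in> carrier R" using f by (rule mem_upD)
    have gc: "\<And>m. g m \<in> carrier R" using g by (rule mem_upD)
    define F where "F = (\<lambda>m. sc n (f m))"
    define G where "G = (\<lambda>m. sc n (g m))"
    have Fu: "F \<in> up (UT n R)" unfolding F_def by (rule scup[OF f])
    have Gu: "G \<in> up (UT n R)" unfolding G_def by (rule scup[OF g])
    have "F \<otimes>\<^bsub>UP (UT n R)\<^esub> G = (\<lambda>i. \<zero>\<^bsub>UT n R\<^esub>)"
    proof (rule ext)
      fix m
      have "(F \<otimes>\<^bsub>UP (UT n R)\<^esub> G) m = (\<Oplus>\<^bsub>UT n R\<^esub>i\<in>{..m}. F i \<otimes>\<^bsub>UT n R\<^esub> G (m - i))"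
        by (rule U.UP_mult_eq[OF Fu Gu])
      also have "\<dots> = (\<Oplus>\<^bsub>UT n R\<^esub>i\<in>{..m}. (sc n \<circ> (\<lambda>i. f i \<otimes> g (m - i))) i)"
        by (rule U.fcong) (simp_all add: F_def G_def fc gc ring_hom_mult[OF hh]
            ring_hom_closed[OF hh])
      also have "\<dots> = sc n (\<Oplus>i\<in>{..m}. f i \<otimes> g (m - i))"
        using ring_hom_ring.hom_finsum[OF hom, of "\<lambda>i. f i \<otimes> g (m - i)" "{..m}"] fc gc
        by (simp add: Pi_def comp_def)
      also have "\<dots> = sc n ((f \<otimes>\<^bsub>UP R\<^esub> g) m)" by (simp add: UP_mult_eq[OF f g])
      also have "\<dots> = \<zero>\<^bsub>UT n R\<^esub>" using fg sc0 by simp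
      finally show "(F \<otimes>\<^bsub>UP (UT n R)\<^esub> G) m = \<zero>\<^bsub>UT n R\<^esub>" .
    qed
    then have "F i \<otimes>\<^bsub>UT n R\<^esub> G j \<in> prime_radical (UT n R)" using HU Fu Gu by blast
    then have "(F i \<otimes>\<^bsub>UT n R\<^esub> G j) 0 0 \<in> prime_radical R"
      using UT_radical_diag n by simp
    moreover have "F i \<otimes>\<^bsub>UT n R\<^esub> G j = sc n (f i \<otimes> g j)"
      unfolding F_def G_def using ring_hom_mult[OF hh] fc gc by simp
    ultimately show "f i \<otimes> g j \<in> prime_radical R" using n by (simp add: sc_def)
  qed
qed

end

theorem proposition2p1:
  fixes R :: "('a, 'b) ring_scheme" and n :: nat
  assumes "ring R" and "n \<ge> 1"
  shows "almost_armendariz R \<longleftrightarrow> almost_armendariz (UT n R)"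
  using ring.dir1[OF assms(1)] ring.dir2[OF assms(1) _ assms(2)] by blast

end
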